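(* Let $G$ be split reductive with root system of type $C_r$, $r\geqslant2$, with simple roots $\alpha_1,\dots,\alpha_r$ in Bourbaki labelling ($\alpha_r$ long), and let $\widetilde G$ be an $n$-fold Brylinski--Deligne cover associated with a Weyl-invariant quadratic form $Q$. Partition $\Phi_+=\Phi_{+,I}\sqcup\Phi_{+,II}\sqcup\Phi_{+,III}$ with $\Phi_{+,I}=\{\sum_{i\leqslant k<j}\alpha_k:1\leqslant i<j\leqslant r\}$, $\Phi_{+,II}=\{\sum_{i\leqslant k<j}\alpha_k+2\sum_{j\leqslant k<r}\alpha_k+\alpha_r:1\leqslant i<j\leqslant r\}$, $\Phi_{+,III}=\{2\sum_{i\leqslant k<r}\alpha_k+\alpha_r:1\leqslant i\leqslant r\}$, and $\Phi^\vee_+=\Phi^\vee_{+,I}\sqcup\Phi^\vee_{+,II}\sqcup\Phi^\vee_{+,III}$ with $\Phi^\vee_{+,I}=\{\sum_{i\leqslant k\leqslant r}\alpha^\vee_k:1\leqslant i\leqslant r\}$, $\Phi^\vee_{+,II}=\{\sum_{i\leqslant k<j}\alpha_k^\vee:1\leqslant i<j\leqslant r\}$, $\Phi^\vee_{+,III}=\{\sum_{i\leqslant k<j}\alpha^\vee_k+2\sum_{j\leqslant k\leqslant r}\alpha^\vee_k:1\leqslant i<j\leqslant r\}$. If $2\tilde n_{\alpha_i}=\tilde n_{\alpha_r}$ for all $1\leqslant i<r$, then necessarily $\tilde n_{\alpha_i}=n_{\alpha_i}$ for all $1\leqslant i\leqslant r$ and $$f_X(\Phi^\vee_{+,I})=f_Y(\Phi_{+,III}),\quad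 f_X(\Phi^\vee_{+,II})=f_Y(\Phi_{+,I}),\quad f_X(\Phi^\vee_{+,III})=f_Y(\Phi_{+,II});$$ in this case $f_X(\Phi^\vee_+)=\frac{[1,2r-1]}{2n_{\alpha_1}}\cup\frac{[2,2r-2]}{n_{\alpha_1}}=f_Y(\Phi_+)$. If $\tilde n_\alpha$ is constant on $\alpha\in\Delta$, then $f_X(\Phi^\vee_+)=\frac{1}{\tilde n_\alpha}[1,2r-1]=f_Y(\Phi_+)$.
   Context: $[a,b]$ denotes $\{a,a+1,\dots,b\}$ and $\frac{S}{m}=\{s/m:s\in S\}$. Notation: $\omega_\alpha$ fundamental weights, $\omega^\vee_\alpha$ fundamental coweights, $\rho^\vee=\sum_{\alpha\in\Delta}\omega_\alpha^\vee$. $B_Q(y,z)=Q(y+z)-Q(y)-Q(z)$, $Y_{Q,n}=\{y\in Y:B_Q(y,z)\in n\mathbf Z\ \forall z\in Y\}$, $n_\alpha=n/\gcd(n,Q(\alpha^\vee))$, and $\tilde n_\alpha\in\{n_\alpha,n_\alpha/2\}$ ($\alpha\in\Phi$) defined by $\mathbf Z\alpha^\vee\cap Y_{Q,n}=\mathbf Z\tilde n_\alpha\alpha^\vee$. $f_X:\Phi_+^\vee\to\mathbf Q$, $f_X(\beta^\vee)=\sum_{\alpha\in\Delta}\langle\omega_\alpha/\tilde n_\alpha,\beta^\vee\rangle$; $f_Y:\Phi_+\to\mathbf Q$, $f_Y(\beta)=\langle\rho^\vee,\beta\rangle/\tilde n_\beta$. *)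

theory Defs
  imports "HOL-Analysis.Analysis"
begin

text \<open>Cocharacter lattice Y = int^'d; characters X = Hom(Y,Z) = int^'d with the
  standard pairing.\<close>

definition pairing :: "int ^ 'd \<Rightarrow> int ^ 'd \<Rightarrow> int" where
  "pairing x y = (\<Sum>m\<in>UNIV. x $ m * y $ m)"

definition BQ :: "(int ^ 'd \<Rightarrow> int) \<Rightarrow> int ^ 'd \<Rightarrow> int ^ 'd \<Rightarrow> int" where
  "BQ Q y z = Q (y + z) - Q y - Q z"

definition quadratic_form :: "(int ^ 'd \<Rightarrow> int) \<Rightarrow> bool" where
  "quadratic_form Q \<longleftrightarrow> (\<forall>k y. Q (k *s y) = k ^ 2 * Q y)
      \<and> (\<forall>x y z. BQ Q (x + y) z = BQ Q x z + BQ Q y z)"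

definition YQn :: "(int ^ 'd \<Rightarrow> int) \<Rightarrow> nat \<Rightarrow> (int ^ 'd) set" where
  "YQn Q n = {y. \<forall>z. int n dvd BQ Q y z}"

definition n_cor :: "(int ^ 'd \<Rightarrow> int) \<Rightarrow> nat \<Rightarrow> int ^ 'd \<Rightarrow> nat" where
  "n_cor Q n c = nat (int n div gcd (int n) (Q c))"

definition tn_cor :: "(int ^ 'd \<Rightarrow> int) \<Rightarrow> nat \<Rightarrow> int ^ 'd \<Rightarrow> nat" where
  "tn_cor Q n c = (THE k::nat. k > 0 \<and>
      range (\<lambda>m::int. m *s c) \<inter> YQn Q n = range (\<lambda>m::int. (m * int k) *s c))"

text \<open>Cartan integers <alpha_i, alpha_j^vee> of type C_r, Bourbaki labelling, alpha_r long.\<close>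
definition cartan_C :: "nat \<Rightarrow> nat \<Rightarrow> nat \<Rightarrow> int" where
  "cartan_C r i j =
     (if i = j then 2
      else if i = r \<and> j = r - 1 then -2
      else if j = i + 1 \<or> i = j + 1 then -1
      else 0)"

text \<open>Simple roots rt 1..r in X and simple coroots cor 1..r in Y forming a root datum of
  type C_r, and Q a Weyl-invariant integer quadratic form on Y.\<close>
definition root_datum_C :: "nat \<Rightarrow> (nat \<Rightarrow> int ^ 'd) \<Rightarrow> (nat \<Rightarrow> int ^ 'd) \<Rightarrow> bool" where
  "root_datum_C r rt cor \<longleftrightarrow>
     (\<forall>i\<in>{1..r}. \<forall>j\<in>{1..r}. pairing (rt i) (cor j) = cartan_C r i j)"

definition weyl_invariant :: "nat \<Rightarrow> (nat \<Rightarrow> int ^ 'd) \<Rightarrow> (nat \<Rightarrow> int ^ 'd) \<Rightarrow> (int ^ 'd \<Rightarrow> int) \<Rightarrow> bool" where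
  "weyl_invariant r rt cor Q \<longleftrightarrow>
     (\<forall>i\<in>{1..r}. \<forall>y. Q (y - pairing (rt i) y *s cor i) = Q y)"

text \<open>Positive roots (coefficient vectors w.r.t. alpha_1..alpha_r) and positive coroots
  (coefficient vectors w.r.t. alpha_1^vee..alpha_r^vee).\<close>
definition PhiI :: "nat \<Rightarrow> (nat \<Rightarrow> int) set" where
  "PhiI r = {(\<lambda>k. if i \<le> k \<and> k < j then 1 else 0) | i j. 1 \<le> i \<and> i < j \<and> j \<le> r}"

definition PhiII :: "nat \<Rightarrow> (nat \<Rightarrow> int) set" where
  "PhiII r = {(\<lambda>k. if i \<le> k \<and> k < j then 1 else if j \<le> k \<and> k < r then 2
                  else if k = r then 1 else 0) | i j. 1 \<le> i \<and> i < j \<and> j \<le> r}"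

definition PhiIII :: "nat \<Rightarrow> (nat \<Rightarrow> int) set" where
  "PhiIII r = {(\<lambda>k. if i \<le> k \<and> k < r then 2 else if k = r then 1 else 0) | i. 1 \<le> i \<and> i \<le> r}"

definition PhiPos :: "nat \<Rightarrow> (nat \<Rightarrow> int) set" where
  "PhiPos r = PhiI r \<union> PhiII r \<union> PhiIII r"

definition CoPhiI :: "nat \<Rightarrow> (nat \<Rightarrow> int) set" where
  "CoPhiI r = {(\<lambda>k. if i \<le> k \<and> k \<le> r then 1 else 0) | i. 1 \<le> i \<and> i \<le> r}"

definition CoPhiII :: "nat \<Rightarrow> (nat \<Rightarrow> int) set" where
  "CoPhiII r = {(\<lambda>k. if i \<le> k \<and> k < j then 1 else 0) | i j. 1 \<le> i \<and> i < j \<and> j \<le> r}"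

definition CoPhiIII :: "nat \<Rightarrow> (nat \<Rightarrow> int) set" where
  "CoPhiIII r = {(\<lambda>k. if i \<le> k \<and> k < j then 1 else if j \<le> k \<and> k \<le> r then 2 else 0)
                 | i j. 1 \<le> i \<and> i < j \<and> j \<le> r}"

definition CoPhiPos :: "nat \<Rightarrow> (nat \<Rightarrow> int) set" where
  "CoPhiPos r = CoPhiI r \<union> CoPhiII r \<union> CoPhiIII r"

text \<open>Coroot beta^vee = 2 beta/(beta,beta) of a positive root of C_r, in coordinates:
  coefficient k is beta_k (alpha_k,alpha_k)/(beta,beta); long roots are those in PhiIII.\<close>
definition coroot_C :: "nat \<Rightarrow> (nat \<Rightarrow> int) \<Rightarrow> (nat \<Rightarrow> int)" where
  "coroot_C r \<beta> = (\<lambda>k. if 1 \<le> k \<and> k \<le> r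
       then (\<beta> k * (if k = r then 2 else 1)) div (if \<beta> \<in> PhiIII r then 2 else 1) else 0)"

definition corvec :: "nat \<Rightarrow> (nat \<Rightarrow> int ^ 'd) \<Rightarrow> (nat \<Rightarrow> int) \<Rightarrow> int ^ 'd" where
  "corvec r cor c = (\<Sum>k\<in>{1..r}. c k *s cor k)"

text \<open>f_X(beta^vee) = sum_alpha <omega_alpha / tilde n_alpha, beta^vee>.\<close>
definition fX :: "(int ^ 'd \<Rightarrow> int) \<Rightarrow> nat \<Rightarrow> nat \<Rightarrow> (nat \<Rightarrow> int ^ 'd) \<Rightarrow> (nat \<Rightarrow> int) \<Rightarrow> rat" where
  "fX Q n r cor c = (\<Sum>i\<in>{1..r}. of_int (c i) / of_nat (tn_cor Q n (cor i)))"

text \<open>f_Y(beta) = <rho^vee, beta> / tilde n_beta.\<close>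
definition fY :: "(int ^ 'd \<Rightarrow> int) \<Rightarrow> nat \<Rightarrow> nat \<Rightarrow> (nat \<Rightarrow> int ^ 'd) \<Rightarrow> (nat \<Rightarrow> int) \<Rightarrow> rat" where
  "fY Q n r cor \<beta> = of_int (\<Sum>k\<in>{1..r}. \<beta> k)
       / of_nat (tn_cor Q n (corvec r cor (coroot_C r \<beta>)))"

end

theory Submission
  imports Defs
begin

lemma BQ_sym: "BQ Q y z = BQ Q z y"
  unfolding BQ_def by (simp add: add.commute)

context
  fixes Q :: "int ^ 'd \<Rightarrow> int"
  assumes qf: "quadratic_form Q"
begin

lemma BQ_add1: "BQ Q (x + y) z = BQ Q x z + BQ Q y z"
  using qf unfolding quadratic_form_def by blast

lemma BQ_add2: "BQ Q z (x + y) = BQ Q z x + BQ Q z y"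
proof -
  have "BQ Q z (x + y) = BQ Q (x + y) z" by (rule BQ_sym)
  also have "\<dots> = BQ Q x z + BQ Q y z" by (rule BQ_add1)
  also have "\<dots> = BQ Q z x + BQ Q z y" by (simp only: BQ_sym[of Q x z] BQ_sym[of Q y z])
  finally show ?thesis .
qed

lemma BQ_zero1: "BQ Q 0 z = 0"
  using BQ_add1[of 0 0 z] by simp

lemma BQ_neg1: "BQ Q (- y) z = - BQ Q y z"
  using BQ_add1[of y "-y" z] BQ_zero1 by simp

lemma BQ_smult_nat: "BQ Q (of_nat m *s y) z = of_nat m * BQ Q y z"
proof (induction m)
  case 0 then show ?case using BQ_zero1 by simp
next
  case (Suc m)
  have "of_nat (Suc m) *s y = of_nat m *s y + y"
    by (simp add: vector_sadd_rdistrib)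
  then show ?case using Suc BQ_add1 by (simp add: algebra_simps)
qed

lemma BQ_smult1: "BQ Q (m *s y) z = m * BQ Q y z"
proof (cases "m \<ge> 0")
  case True
  define k where "k = nat m"
  have "m = of_nat k" using True k_def by simp
  then show ?thesis using BQ_smult_nat by simp
next
  case False
  define k where "k = nat (- m)"
  have k: "m = - of_nat k" using False k_def by simp
  have "m *s y = - (of_nat k *s y)" using k by (simp add: vector_sneg_minus1 vector_smult_assoc)
  then show ?thesis using BQ_smult_nat BQ_neg1 k by simp
qed

lemma BQ_smult2: "BQ Q z (m *s y) = m * BQ Q z y"
  using BQ_smult1[of m y z] BQ_sym[of Q z y] BQ_sym[of Q z "m *s y"] by simp

lemma BQ_sum1: "finite S \<Longrightarrow> BQ Q (\<Sum>k\<in>S. g k) z = (\<Sum>k\<in>S. BQ Q (g k) z)"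
  by (induction S rule: finite_induct) (simp_all add: BQ_zero1 BQ_add1)

lemma BQ_self: "BQ Q y y = 2 * Q y"
proof -
  have "Q ((2::int) *s y) = 2^2 * Q y" using qf unfolding quadratic_form_def by blast
  moreover have "(2::int) *s y = y + y" by (simp add: vec_eq_iff)
  ultimately have "Q (y + y) = 4 * Q y" by simp
  then show ?thesis unfolding BQ_def by simp
qed

end

lemma pairing_add2: "pairing x (y + z) = pairing x y + pairing x z"
  unfolding pairing_def by (simp add: distrib_left sum.distrib)
lemma pairing_smult2: "pairing x (m *s y) = m * pairing x y"
  unfolding pairing_def by (simp add: sum_distrib_left mult.left_commute)
lemma pairing_zero2: "pairing x 0 = 0"
  unfolding pairing_def by simp
lemma pairing_sum2: "finite S \<Longrightarrow> pairing x (\<Sum>k\<in>S. g k) = (\<Sum>k\<in>S. pairing x (g k))"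
  by (induction S rule: finite_induct) (simp_all add: pairing_zero2 pairing_add2)

lemma weyl_BQ:
  assumes qf: "quadratic_form Q"
    and W: "\<And>y. Q (y - pairing a y *s c) = Q y"
    and two: "pairing a c = 2"
  shows "BQ Q c z = pairing a z * Q c"
proof -
  have key: "pairing a w * BQ Q c w = (pairing a w)^2 * Q c" for w
  proof -
    define t where "t = pairing a w"
    have "w + (- t) *s c = w - t *s c" by (simp add: vec_eq_iff)
    then have 1: "Q (w + (- t) *s c) = Q w" using W[of w] t_def by simp
    have 2: "Q (w + (- t) *s c) = Q w + Q ((- t) *s c) + BQ Q w ((- t) *s c)"
      unfolding BQ_def by simp
    have "Q ((- t) *s c) = (- t)^2 * Q c" using qf unfolding quadratic_form_def by blast
    then have 3: "Q ((- t) *s c) = t^2 * Q c" by simp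
    have 4: "BQ Q w ((- t) *s c) = - t * BQ Q c w"
      by (simp add: BQ_smult2[OF qf] BQ_sym[of Q w c])
    from 1 2 3 4 have "t * BQ Q c w = t^2 * Q c" by linarith
    then show ?thesis unfolding t_def by simp
  qed
  show ?thesis
  proof (cases "pairing a z = 0")
    case False
    have "pairing a z * BQ Q c z = pairing a z * (pairing a z * Q c)"
      using key[of z] by (simp add: power2_eq_square)
    then show ?thesis using False by simp
  next
    case True
    have p: "pairing a (z + c) = 2" by (simp add: pairing_add2 True two)
    have "BQ Q c (z + c) = BQ Q c z + BQ Q c c"
      by (rule BQ_add2[OF qf])
    also have "BQ Q c c = 2 * Q c" by (rule BQ_self[OF qf])
    finally have e: "BQ Q c (z + c) = BQ Q c z + 2 * Q c" .
    have "2 * BQ Q c (z + c) = 4 * Q c" using key[of "z + c"] unfolding p by simp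
    then show ?thesis using e True by simp
  qed
qed

lemma smult_cancel:
  fixes y :: "int ^ 'd"
  assumes "y \<noteq> 0" "a *s y = b *s y"
  shows "a = b"
proof -
  obtain i where "y $ i \<noteq> 0" using assms(1) by (metis vec_eq_iff zero_index)
  moreover have "a * y $ i = b * y $ i" using assms(2) by (metis vector_smult_component)
  ultimately show ?thesis by simp
qed

lemma tn_char:
  fixes y :: "int ^ 'd"
  assumes y: "y \<noteq> 0" and N: "N > 0"
    and H: "\<And>m::int. m *s y \<in> YQn Q n \<longleftrightarrow> int N dvd m"
  shows "tn_cor Q n y = N"
  unfolding tn_cor_def
proof (rule the_equality)
  show "0 < N \<and> range (\<lambda>m. m *s y) \<inter> YQn Q n = range (\<lambda>m. (m * int N) *s y)"
  proof (intro conjI N set_eqI iffI)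
    fix x assume "x \<in> range (\<lambda>m. m *s y) \<inter> YQn Q n"
    then obtain m where m: "x = m *s y" "m *s y \<in> YQn Q n" by auto
    then obtain k where "m = int N * k" using H by (meson dvdE)
    then show "x \<in> range (\<lambda>m. (m * int N) *s y)" using m by (auto simp: mult.commute)
  next
    fix x assume "x \<in> range (\<lambda>m. (m * int N) *s y)"
    then obtain m where m: "x = (m * int N) *s y" by auto
    then show "x \<in> range (\<lambda>m. m *s y) \<inter> YQn Q n" using H[of "m * int N"] by auto
  qed
next
  fix k assume k: "0 < k \<and> range (\<lambda>m. m *s y) \<inter> YQn Q n = range (\<lambda>m. (m * int k) *s y)"
  have "int N *s y \<in> range (\<lambda>m. m *s y) \<inter> YQn Q n" using H by auto
  then obtain m where "int N *s y = (m * int k) *s y" using k by auto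
  then have e: "int N = m * int k" using smult_cancel[OF y] by blast
  have "(1 * int k) *s y \<in> range (\<lambda>m. (m * int k) *s y)" by blast
  then have "int k *s y \<in> YQn Q n" using k by auto
  then have "int N dvd int k" using H by blast
  then show "k = N" using e k N
    by (metis dvd_antisym dvd_triv_right int_dvd_int_iff)
qed

lemma dvd_div_gcd_iff:
  fixes n K m :: int
  assumes n: "n > 0"
  shows "n dvd m * K \<longleftrightarrow> (n div gcd n K) dvd m"
proof -
  define g where "g = gcd n K"
  have g0: "g > 0" using n g_def by simp
  have n': "n = g * (n div g)" using g_def by simp
  have K': "K = g * (K div g)" using g_def by simp
  have cop: "coprime (n div g) (K div g)" using div_gcd_coprime[of n K] n g_def by simp
  have "n dvd m * K \<longleftrightarrow> g * (n div g) dvd g * (m * (K div g))"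
    using n' K' by (metis mult.left_commute)
  also have "\<dots> \<longleftrightarrow> (n div g) dvd m * (K div g)" using g0 by simp
  also have "\<dots> \<longleftrightarrow> (n div g) dvd m" using coprime_dvd_mult_left_iff[OF cop] by simp
  finally show ?thesis unfolding g_def .
qed

lemma mem_YQn_smult:
  assumes qf: "quadratic_form Q"
  shows "m *s y \<in> YQn Q n \<longleftrightarrow> (\<forall>z. int n dvd m * BQ Q y z)"
  unfolding YQn_def using BQ_smult1[OF qf] by simp

lemma tn_gen:
  fixes y :: "int ^ 'd"
  assumes qf: "quadratic_form Q" and n: "n \<ge> 1" and y: "y \<noteq> 0"
    and B: "\<And>z. BQ Q y z = K * f z"
    and cop: "coprime (f z1) (f z2)"
  shows "tn_cor Q n y = nat (int n div gcd (int n) K)"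
proof (rule tn_char[OF y])
  have "int n div gcd (int n) K > 0"
  proof -
    obtain t where t: "int n = gcd (int n) K * t" by (meson gcd_dvd1 dvdE)
    have gp: "gcd (int n) K > 0" using n by simp
    have "t > 0" using t gp n by (metis of_nat_0_less_iff zero_less_mult_iff less_le_trans zero_less_one
          order.strict_iff_not linorder_not_le)
    moreover have "int n div gcd (int n) K = t" using t gp
      by (metis nonzero_mult_div_cancel_left order_less_irrefl)
    ultimately show ?thesis by simp
  qed
  then show "nat (int n div gcd (int n) K) > 0" by simp
  fix m :: int
  have "m *s y \<in> YQn Q n \<longleftrightarrow> int n dvd m * K"
  proof -
    have "(\<forall>z. int n dvd m * BQ Q y z) \<longleftrightarrow> int n dvd m * K"
    proof
      assume A: "\<forall>z. int n dvd m * BQ Q y z"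
      have "int n dvd (m * K) * f z1" "int n dvd (m * K) * f z2" using A B
        by (metis mult.assoc)+
      then have "int n dvd gcd ((m * K) * f z1) ((m * K) * f z2)" by simp
      also have "gcd ((m * K) * f z1) ((m * K) * f z2) = \<bar>m * K\<bar>"
        using gcd_mult_distrib_int[of "m * K" "f z1" "f z2"] cop by simp
      finally show "int n dvd m * K" by simp
    next
      assume "int n dvd m * K"
      then show "\<forall>z. int n dvd m * BQ Q y z" using B by (simp add: mult.assoc[symmetric])
    qed
    then show ?thesis using mem_YQn_smult[OF qf] by simp
  qed
  also have "\<dots> \<longleftrightarrow> (int n div gcd (int n) K) dvd m" using dvd_div_gcd_iff n by simp
  also have "\<dots> \<longleftrightarrow> int (nat (int n div gcd (int n) K)) dvd m"
    using \<open>int n div gcd (int n) K > 0\<close> by simp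
  finally show "m *s y \<in> YQn Q n \<longleftrightarrow> int (nat (int n div gcd (int n) K)) dvd m" .
qed

lemma tn_gen2:
  fixes y :: "int ^ 'd"
  assumes qf: "quadratic_form Q" and n: "n \<ge> 1" and y: "y \<noteq> 0"
    and B: "\<And>z. BQ Q y z = K * f z"
    and ev: "\<And>z. even (f z)" and two: "f z0 = 2"
  shows "tn_cor Q n y = nat (int n div gcd (int n) (2 * K))"
proof -
  have B': "BQ Q y z = (2 * K) * (f z div 2)" for z using B[of z] ev[of z] by auto
  have c: "coprime (f z0 div 2) (f z0 div 2)" using two by simp
  show ?thesis using tn_gen[OF qf n y B' c] .
qed

locale CS =
  fixes Q :: "int ^ 'd \<Rightarrow> int" and n r :: nat and rt cor :: "nat \<Rightarrow> int ^ 'd"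
  assumes r2: "r \<ge> 2" and n1: "n \<ge> 1"
    and rd: "root_datum_C r rt cor"
    and qf: "quadratic_form Q"
    and wi: "weyl_invariant r rt cor Q"
begin

abbreviation "q \<equiv> Q (cor r)"

lemma a_cor: "i \<in> {1..r} \<Longrightarrow> j \<in> {1..r} \<Longrightarrow> pairing (rt i) (cor j) = cartan_C r i j"
  using rd unfolding root_datum_C_def by blast

lemma cartan_diag: "cartan_C r k k = 2" unfolding cartan_C_def by (rule if_P) (rule refl)

lemma a_cor_diag: "k \<in> {1..r} \<Longrightarrow> pairing (rt k) (cor k) = 2"
  using a_cor[of k k] cartan_diag by simp

lemma BQ_cor: "k \<in> {1..r} \<Longrightarrow> BQ Q (cor k) z = pairing (rt k) z * Q (cor k)"
proof -
  assume k: "k \<in> {1..r}"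
  have W: "\<And>y. Q (y - pairing (rt k) y *s cor k) = Q y"
    using wi k unfolding weyl_invariant_def by blast
  have t: "pairing (rt k) (cor k) = 2" using a_cor_diag[OF k] .
  show ?thesis by (rule weyl_BQ[of Q "rt k" "cor k", OF qf W t])
qed

lemma cor_nz: assumes k: "k \<in> {1..r}" shows "cor k \<noteq> 0"
proof
  assume "cor k = 0"
  then have "pairing (rt k) (cor k) = 0" by (simp add: pairing_zero2)
  moreover have "pairing (rt k) (cor k) = 2" using a_cor_diag[OF k] .
  ultimately show False by simp
qed

lemma Q_step: "1 \<le> k \<Longrightarrow> k < r \<Longrightarrow> Q (cor k) = (if k + 1 = r then 2 * Q (cor (k+1)) else Q (cor (k+1)))"
proof -
  assume k: "1 \<le> k" "k < r"
  have k1: "k \<in> {1..r}" and k2: "k + 1 \<in> {1..r}" using k by auto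
  have c1: "cartan_C r k (k+1) = -1" using k unfolding cartan_C_def by simp
  have c2: "cartan_C r (k+1) k = (if k + 1 = r then -2 else -1)" using k unfolding cartan_C_def by auto
  have 1: "BQ Q (cor k) (cor (k+1)) = - Q (cor k)"
    using BQ_cor[OF k1, of "cor (k+1)"] a_cor[OF k1 k2] c1 by simp
  have 2: "BQ Q (cor (k+1)) (cor k) = (if k + 1 = r then -2 else -1) * Q (cor (k+1))"
    using BQ_cor[OF k2, of "cor k"] a_cor[OF k2 k1] c2 by simp
  have 3: "BQ Q (cor k) (cor (k+1)) = BQ Q (cor (k+1)) (cor k)" by (rule BQ_sym)
  have 4: "- Q (cor k) = (if k + 1 = r then -2 else -1) * Q (cor (k+1))"
    using 1 2 3 by linarith
  show ?thesis
  proof (cases "k + 1 = r")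
    case True
    then show ?thesis using 4 by simp
  next
    case False
    then show ?thesis using 4 by simp
  qed
qed

lemma Q_cor_lt: assumes k: "1 \<le> k" "k < r" shows "Q (cor k) = 2 * q"
proof -
  have H: "d < r - 1 \<Longrightarrow> Q (cor (r - 1 - d)) = 2 * q" for d
  proof (induction d)
    case 0
    have "Q (cor (r - 1)) = (if r - 1 + 1 = r then 2 * Q (cor (r - 1 + 1)) else Q (cor (r - 1 + 1)))"
      using Q_step[of "r - 1"] r2 by simp
    also have "r - 1 + 1 = r" using r2 by simp
    finally show ?case by simp
  next
    case (Suc d)
    define k where "k = r - 1 - Suc d"
    have k1: "1 \<le> k" "k < r" "k + 1 \<noteq> r" "k + 1 = r - 1 - d" using Suc.prems k_def by auto
    have "Q (cor k) = Q (cor (k + 1))" using Q_step[OF k1(1,2)] k1(3) by simp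
    also have "\<dots> = 2 * q" using Suc.IH Suc.prems k1(4) by simp
    finally show ?case unfolding k_def .
  qed
  have "r - 1 - (r - 1 - k) = k" "r - 1 - k < r - 1" using k by auto
  then show ?thesis using H[of "r - 1 - k"] by simp
qed

definition wt :: "nat \<Rightarrow> int" where "wt k = (if k = r then 1 else 2)"

lemma BQ_corvec: "BQ Q (corvec r cor c) z = q * (\<Sum>k\<in>{1..r}. c k * wt k * pairing (rt k) z)"
proof -
  have "BQ Q (corvec r cor c) z = (\<Sum>k\<in>{1..r}. BQ Q (c k *s cor k) z)"
    unfolding corvec_def by (rule BQ_sum1[OF qf]) simp
  also have "\<dots> = (\<Sum>k\<in>{1..r}. q * (c k * wt k * pairing (rt k) z))"
  proof (rule sum.cong[OF refl])
    fix k assume k: "k \<in> {1..r}"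
    have "BQ Q (c k *s cor k) z = c k * (pairing (rt k) z * Q (cor k))"
      using BQ_smult1[OF qf] BQ_cor[OF k] by simp
    also have "Q (cor k) = q * wt k" using Q_cor_lt[of k] k unfolding wt_def by auto
    finally show "BQ Q (c k *s cor k) z = q * (c k * wt k * pairing (rt k) z)" by simp
  qed
  also have "\<dots> = q * (\<Sum>k\<in>{1..r}. c k * wt k * pairing (rt k) z)" by (simp add: sum_distrib_left)
  finally show ?thesis .
qed

lemma a_corvec: "l \<in> {1..r} \<Longrightarrow> pairing (rt l) (corvec r cor c) = (\<Sum>k\<in>{1..r}. c k * cartan_C r l k)"
proof -
  assume l: "l \<in> {1..r}"
  have "pairing (rt l) (corvec r cor c) = (\<Sum>k\<in>{1..r}. pairing (rt l) (c k *s cor k))"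
    unfolding corvec_def by (rule pairing_sum2) simp
  also have "\<dots> = (\<Sum>k\<in>{1..r}. c k * cartan_C r l k)"
    by (rule sum.cong[OF refl]) (simp add: pairing_smult2 a_cor[OF l])
  finally show ?thesis .
qed

lemma row3: assumes l: "l \<in> {1..r}"
  shows "(\<Sum>k\<in>{1..r}. c k * cartan_C r l k) =
     2 * c l + (if l - 1 \<in> {1..r} then c (l - 1) * cartan_C r l (l - 1) else 0)
     + (if l + 1 \<in> {1..r} then - c (l + 1) else 0)"
proof -
  have "(\<Sum>k\<in>{1..r}. c k * cartan_C r l k) = (\<Sum>k\<in>{1..r}. (if k = l then 2 * c k else 0)
      + (if k = l - 1 then c k * cartan_C r l k else 0) + (if k = l + 1 then - c k else 0))"
  proof (rule sum.cong[OF refl])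
    fix k assume k: "k \<in> {1..r}"
    show "c k * cartan_C r l k = (if k = l then 2 * c k else 0)
      + (if k = l - 1 then c k * cartan_C r l k else 0) + (if k = l + 1 then - c k else 0)"
    proof -
      consider "k = l" | "k \<noteq> l" "k = l - 1" | "k = l + 1" | "k \<noteq> l" "k \<noteq> l - 1" "k \<noteq> l + 1"
        by blast
      then show ?thesis
      proof cases
        case 1
        moreover have "l \<noteq> l - 1" "l \<noteq> l + 1" using l by auto
        ultimately show ?thesis by (simp add: cartan_C_def)
      next
        case 2 then show ?thesis by simp
      next
        case 3
        then have "l \<noteq> r" using k by auto
        then show ?thesis using 3 by (simp add: cartan_C_def)
      next
        case 4
        then have "\<not>(l = r \<and> k = r - 1)" "\<not>(k = l + 1 \<or> l = k + 1)" by auto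
        then have "cartan_C r l k = 0" using 4 unfolding cartan_C_def by simp
        then show ?thesis using 4 by simp
      qed
    qed
  qed
  also have "\<dots> = 2 * c l + (if l - 1 \<in> {1..r} then c (l - 1) * cartan_C r l (l - 1) else 0)
     + (if l + 1 \<in> {1..r} then - c (l + 1) else 0)"
    unfolding sum.distrib sum.delta[OF finite_atLeastAtMost] by (simp only: l if_True)
  finally show ?thesis .
qed

lemma col3: assumes j: "j \<in> {1..r}"
  shows "(\<Sum>k\<in>{1..r}. f k * cartan_C r k j) =
     2 * f j + (if j - 1 \<in> {1..r} then - f (j - 1) else 0)
     + (if j + 1 \<in> {1..r} then f (j + 1) * cartan_C r (j + 1) j else 0)"
proof -
  have "(\<Sum>k\<in>{1..r}. f k * cartan_C r k j) = (\<Sum>k\<in>{1..r}. (if k = j then 2 * f k else 0)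
      + (if k = j - 1 then - f k else 0) + (if k = j + 1 then f k * cartan_C r k j else 0))"
  proof (rule sum.cong[OF refl])
    fix k assume k: "k \<in> {1..r}"
    show "f k * cartan_C r k j = (if k = j then 2 * f k else 0)
      + (if k = j - 1 then - f k else 0) + (if k = j + 1 then f k * cartan_C r k j else 0)"
    proof -
      consider "k = j" | "k \<noteq> j" "k = j - 1" | "k = j + 1" | "k \<noteq> j" "k \<noteq> j - 1" "k \<noteq> j + 1"
        by blast
      then show ?thesis
      proof cases
        case 1
        moreover have "j \<noteq> j - 1" "j \<noteq> j + 1" using j by auto
        ultimately show ?thesis by (simp add: cartan_C_def)
      next
        case 2
        then have kr: "k \<noteq> r" "j = k + 1" using k j by auto
        have "cartan_C r k j = -1" using kr unfolding cartan_C_def by simp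
        then show ?thesis using 2 by simp
      next
        case 3
        then have h: "k \<noteq> j" "k \<noteq> j - 1" by auto
        show ?thesis unfolding if_not_P[OF h(1)] if_not_P[OF h(2)] if_P[OF 3] by simp
      next
        case 4
        then have "\<not>(k = r \<and> j = r - 1)" "\<not>(j = k + 1 \<or> k = j + 1)" using j k by auto
        then have "cartan_C r k j = 0" using 4 unfolding cartan_C_def by simp
        then show ?thesis using 4 by simp
      qed
    qed
  qed
  also have "\<dots> = 2 * f j + (if j - 1 \<in> {1..r} then - f (j - 1) else 0)
     + (if j + 1 \<in> {1..r} then f (j + 1) * cartan_C r (j + 1) j else 0)"
    unfolding sum.distrib sum.delta[OF finite_atLeastAtMost] by (simp only: j if_True)
  finally show ?thesis .
qed

end

definition cI :: "nat \<Rightarrow> nat \<Rightarrow> nat \<Rightarrow> int" where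
  "cI r i = (\<lambda>k. if i \<le> k \<and> k \<le> r then 1 else 0)"
definition cII :: "nat \<Rightarrow> nat \<Rightarrow> nat \<Rightarrow> int" where
  "cII i j = (\<lambda>k. if i \<le> k \<and> k < j then 1 else 0)"
definition cIII :: "nat \<Rightarrow> nat \<Rightarrow> nat \<Rightarrow> nat \<Rightarrow> int" where
  "cIII r i j = (\<lambda>k. if i \<le> k \<and> k < j then 1 else if j \<le> k \<and> k \<le> r then 2 else 0)"
definition bII :: "nat \<Rightarrow> nat \<Rightarrow> nat \<Rightarrow> nat \<Rightarrow> int" where
  "bII r i j = (\<lambda>k. if i \<le> k \<and> k < j then 1 else if j \<le> k \<and> k < r then 2
                  else if k = r then 1 else 0)"
definition bIII :: "nat \<Rightarrow> nat \<Rightarrow> nat \<Rightarrow> int" where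
  "bIII r i = (\<lambda>k. if i \<le> k \<and> k < r then 2 else if k = r then 1 else 0)"

definition PP :: "nat \<Rightarrow> (nat \<times> nat) set" where
  "PP r = {(i, j). 1 \<le> i \<and> i < j \<and> j \<le> r}"

lemma CoPhiI_eq: "CoPhiI r = cI r ` {1..r}"
  unfolding CoPhiI_def cI_def by auto
lemma CoPhiII_eq: "CoPhiII r = (\<lambda>(i,j). cII i j) ` PP r"
  unfolding CoPhiII_def cII_def PP_def by auto
lemma CoPhiIII_eq: "CoPhiIII r = (\<lambda>(i,j). cIII r i j) ` PP r"
  unfolding CoPhiIII_def cIII_def PP_def by auto
lemma PhiI_eq: "PhiI r = (\<lambda>(i,j). cII i j) ` PP r"
  unfolding PhiI_def cII_def PP_def by auto
lemma PhiII_eq: "PhiII r = (\<lambda>(i,j). bII r i j) ` PP r"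
  unfolding PhiII_def bII_def PP_def by auto
lemma PhiIII_eq: "PhiIII r = bIII r ` {1..r}"
  unfolding PhiIII_def bIII_def by auto


context CS
begin

definition "N1 = nat (int n div gcd (int n) (2 * q))"
definition "N2 = nat (int n div gcd (int n) q)"
definition "Tr = (if (\<exists>z. odd (pairing (rt r) z)) then N2 else N1)"

lemma tn_lt: assumes i: "1 \<le> i" "i < r" shows "tn_cor Q n (cor i) = N1"
proof -
  have i1: "i \<in> {1..r}" and i2: "i + 1 \<in> {1..r}" using i by auto
  have B: "BQ Q (cor i) z = (2 * q) * pairing (rt i) z" for z
    using BQ_cor[OF i1, of z] Q_cor_lt[OF i] by simp
  have v1: "pairing (rt i) (cor i) = 2" using a_cor_diag[OF i1] .
  have "cartan_C r i (i + 1) = -1" using i unfolding cartan_C_def by simp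
  then have v2: "pairing (rt i) (cor (i + 1)) = -1" using a_cor[OF i1 i2] by simp
  have cop: "coprime (pairing (rt i) (cor i)) (pairing (rt i) (cor (i + 1)))"
    unfolding v1 v2 by simp
  show ?thesis unfolding N1_def
    by (rule tn_gen[of Q n "cor i" "2 * q" "pairing (rt i)", OF qf n1 cor_nz[OF i1] B cop])
qed

lemma tn_r: "tn_cor Q n (cor r) = Tr"
proof -
  have r1: "r \<in> {1..r}" using r2 by auto
  have B: "BQ Q (cor r) z = q * pairing (rt r) z" for z
    using BQ_cor[OF r1, of z] by simp
  have v1: "pairing (rt r) (cor r) = 2" using a_cor_diag[OF r1] .
  show ?thesis
  proof (cases "\<exists>z. odd (pairing (rt r) z)")
    case True
    then obtain z0 where z0: "odd (pairing (rt r) z0)" by blast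
    have cop: "coprime (pairing (rt r) (cor r)) (pairing (rt r) z0)"
      unfolding v1 using z0 by simp
    show ?thesis unfolding Tr_def N2_def using True
      tn_gen[of Q n "cor r" "q" "pairing (rt r)", OF qf n1 cor_nz[OF r1] B cop] by simp
  next
    case False
    have ev: "even (pairing (rt r) z)" for z using False by blast
    show ?thesis unfolding Tr_def N1_def using False
      tn_gen2[of Q n "cor r" "q" "pairing (rt r)", OF qf n1 cor_nz[OF r1] B ev v1] by simp
  qed
qed

lemma f_cor: "j \<in> {1..r} \<Longrightarrow> (\<Sum>k\<in>{1..r}. b k * pairing (rt k) (cor j)) = (\<Sum>k\<in>{1..r}. b k * cartan_C r k j)"
  by (rule sum.cong[OF refl]) (simp add: a_cor)

lemma nz_of_pairing: "pairing x y \<noteq> 0 \<Longrightarrow> y \<noteq> 0"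
  using pairing_zero2 by auto

lemma tn_cII: assumes ij: "1 \<le> i" "i < j" "j \<le> r"
  shows "tn_cor Q n (corvec r cor (cII i j)) = N1"
proof -
  define f where "f z = (\<Sum>k\<in>{1..r}. cII i j k * pairing (rt k) z)" for z
  have B: "BQ Q (corvec r cor (cII i j)) z = (2 * q) * f z" for z
  proof -
    have "BQ Q (corvec r cor (cII i j)) z = q * (\<Sum>k\<in>{1..r}. cII i j k * wt k * pairing (rt k) z)"
      by (rule BQ_corvec)
    also have "(\<Sum>k\<in>{1..r}. cII i j k * wt k * pairing (rt k) z) = 2 * f z"
      unfolding f_def sum_distrib_left by (rule sum.cong[OF refl]) (use ij in \<open>auto simp: cII_def wt_def\<close>)
    finally show ?thesis by simp
  qed
  have j1: "j \<in> {1..r}" using ij by auto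
  have jm: "j - 1 \<in> {1..r}" "i \<le> j - 1" "j - 1 < j" "j \<noteq> j - 1" using ij by auto
  have "f (cor j) = (\<Sum>k\<in>{1..r}. cII i j k * cartan_C r k j)" unfolding f_def by (rule f_cor[OF j1])
  also have "\<dots> = -1" unfolding col3[OF j1] using jm by (simp add: cII_def)
  finally have v: "f (cor j) = -1" .
  have cop: "coprime (f (cor j)) (f (cor j))" unfolding v by simp
  have "pairing (rt j) (corvec r cor (cII i j)) = (\<Sum>k\<in>{1..r}. cII i j k * cartan_C r j k)"
    by (rule a_corvec[OF j1])
  also have "\<dots> = cartan_C r j (j - 1)" unfolding row3[OF j1] using jm by (simp add: cII_def)
  also have "\<dots> \<noteq> 0" using jm unfolding cartan_C_def by auto
  finally have nz: "corvec r cor (cII i j) \<noteq> 0" by (rule nz_of_pairing)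
  show ?thesis unfolding N1_def
    by (rule tn_gen[of Q n "corvec r cor (cII i j)" "2 * q" f, OF qf n1 nz B cop])
qed

lemma tn_cIII: assumes ij: "1 \<le> i" "i < j" "j \<le> r"
  shows "tn_cor Q n (corvec r cor (cIII r i j)) = N1"
proof -
  define f where "f z = (\<Sum>k\<in>{1..r}. bII r i j k * pairing (rt k) z)" for z
  have B: "BQ Q (corvec r cor (cIII r i j)) z = (2 * q) * f z" for z
  proof -
    have "BQ Q (corvec r cor (cIII r i j)) z = q * (\<Sum>k\<in>{1..r}. cIII r i j k * wt k * pairing (rt k) z)"
      by (rule BQ_corvec)
    also have "(\<Sum>k\<in>{1..r}. cIII r i j k * wt k * pairing (rt k) z) = 2 * f z"
      unfolding f_def sum_distrib_left by (rule sum.cong[OF refl]) (use ij in \<open>auto simp: cIII_def bII_def wt_def\<close>)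
    finally show ?thesis by simp
  qed
  have j1: "j \<in> {1..r}" using ij by auto
  have jm: "j - 1 \<in> {1..r}" "i \<le> j - 1" "j - 1 < j" "j \<noteq> j - 1" using ij by auto
  have "f (cor j) = (\<Sum>k\<in>{1..r}. bII r i j k * cartan_C r k j)" unfolding f_def by (rule f_cor[OF j1])
  also have "\<dots> = 1"
  proof (cases "j < r")
    case True
    show ?thesis
    proof (cases "j + 1 < r")
      case True
      have "cartan_C r (j + 1) j = -1" using True unfolding cartan_C_def by simp
      then show ?thesis unfolding col3[OF j1] using jm True by (simp add: bII_def)
    next
      case False
      then have jr: "j + 1 = r" using \<open>j < r\<close> by simp
      have "cartan_C r (j + 1) j = -2" using jr unfolding cartan_C_def by auto
      then show ?thesis unfolding col3[OF j1] using jm jr by (simp add: bII_def)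
    qed
  next
    case False
    then have jr: "j = r" using ij by simp
    show ?thesis unfolding col3[OF j1] using jm jr by (simp add: bII_def)
  qed
  finally have v: "f (cor j) = 1" .
  have cop: "coprime (f (cor j)) (f (cor j))" unfolding v by simp
  have "pairing (rt j) (corvec r cor (cIII r i j)) = (\<Sum>k\<in>{1..r}. cIII r i j k * cartan_C r j k)"
    by (rule a_corvec[OF j1])
  also have "\<dots> \<noteq> 0"
  proof (cases "j < r")
    case True
    have "cartan_C r j (j - 1) = -1" using True jm unfolding cartan_C_def by auto
    then show ?thesis unfolding row3[OF j1] using jm True by (simp add: cIII_def)
  next
    case False
    then have jr: "j = r" using ij by simp
    have "cartan_C r j (j - 1) = -2" using jr r2 unfolding cartan_C_def by auto
    then show ?thesis unfolding row3[OF j1] using jm jr r2 by (simp add: cIII_def)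
  qed
  finally have nz: "corvec r cor (cIII r i j) \<noteq> 0" by (rule nz_of_pairing)
  show ?thesis unfolding N1_def
    by (rule tn_gen[of Q n "corvec r cor (cIII r i j)" "2 * q" f, OF qf n1 nz B cop])
qed

lemma tn_cI: assumes i: "1 \<le> i" "i \<le> r"
  shows "tn_cor Q n (corvec r cor (cI r i)) = Tr"
proof -
  define f where "f z = (\<Sum>k\<in>{1..r}. bIII r i k * pairing (rt k) z)" for z
  have B: "BQ Q (corvec r cor (cI r i)) z = q * f z" for z
  proof -
    have "BQ Q (corvec r cor (cI r i)) z = q * (\<Sum>k\<in>{1..r}. cI r i k * wt k * pairing (rt k) z)"
      by (rule BQ_corvec)
    also have "(\<Sum>k\<in>{1..r}. cI r i k * wt k * pairing (rt k) z) = f z"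
      unfolding f_def by (rule sum.cong[OF refl]) (use i in \<open>auto simp: cI_def bIII_def wt_def\<close>)
    finally show ?thesis by simp
  qed
  have i1: "i \<in> {1..r}" using i by auto
  have r1: "r \<in> {1..r}" using r2 by auto
  have im: "\<not> i \<le> i - 1" "i \<noteq> i - 1" using i by auto
  have "f (cor i) = (\<Sum>k\<in>{1..r}. bIII r i k * cartan_C r k i)" unfolding f_def by (rule f_cor[OF i1])
  also have "\<dots> = 2"
  proof (cases "i < r")
    case True
    show ?thesis
    proof (cases "i + 1 < r")
      case True
      have "cartan_C r (i + 1) i = -1" using True unfolding cartan_C_def by simp
      then show ?thesis unfolding col3[OF i1] using im True by (simp add: bIII_def)
    next
      case False
      then have ir: "i + 1 = r" using \<open>i < r\<close> by simp
      have "cartan_C r (i + 1) i = -2" using ir unfolding cartan_C_def by auto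
      then show ?thesis unfolding col3[OF i1] using im ir by (simp add: bIII_def)
    qed
  next
    case False
    then have ir: "i = r" using i by simp
    show ?thesis unfolding col3[OF i1] using im ir by (simp add: bIII_def)
  qed
  finally have v: "f (cor i) = 2" .
  have par: "even (f z - pairing (rt r) z)" for z
  proof -
    have d: "(\<Sum>k\<in>{1..r}. (if k = r then pairing (rt k) z else 0)) = pairing (rt r) z"
      using r1 by simp
    have "f z - pairing (rt r) z = (\<Sum>k\<in>{1..r}. bIII r i k * pairing (rt k) z - (if k = r then pairing (rt k) z else 0))"
      unfolding f_def sum_subtractf d ..
    also have "\<dots> = (\<Sum>k\<in>{1..r}. (bIII r i k - (if k = r then 1 else 0)) * pairing (rt k) z)"
      by (rule sum.cong[OF refl]) (simp add: left_diff_distrib)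
    also have "even \<dots>"
      by (rule dvd_sum) (auto simp: bIII_def)
    finally show ?thesis .
  qed
  have "pairing (rt i) (corvec r cor (cI r i)) = (\<Sum>k\<in>{1..r}. cI r i k * cartan_C r i k)"
    by (rule a_corvec[OF i1])
  also have "\<dots> \<noteq> 0"
    unfolding row3[OF i1] using im i by (auto simp: cI_def)
  finally have nz: "corvec r cor (cI r i) \<noteq> 0" by (rule nz_of_pairing)
  show ?thesis
  proof (cases "\<exists>z. odd (pairing (rt r) z)")
    case True
    then obtain z0 where z0: "odd (pairing (rt r) z0)" by blast
    have "odd (f z0)" using par[of z0] z0 by auto
    then have cop: "coprime (f (cor i)) (f z0)" unfolding v by simp
    show ?thesis unfolding Tr_def N2_def using True
      tn_gen[of Q n "corvec r cor (cI r i)" "q" f, OF qf n1 nz B cop] by simp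
  next
    case False
    have ev: "even (f z)" for z using False par[of z] by auto
    show ?thesis unfolding Tr_def N1_def using False
      tn_gen2[of Q n "corvec r cor (cI r i)" "q" f, OF qf n1 nz B ev v] by simp
  qed
qed

end

lemma sum_ind_card: "finite S \<Longrightarrow> (\<Sum>k\<in>S. if P k then (1::int) else 0) = int (card {k\<in>S. P k})"
  by (simp add: sum.inter_filter[symmetric])

lemma sum_12: "finite S \<Longrightarrow> (\<Sum>k\<in>S. if P k then (1::int) else if R k then 2 else 0)
   = int (card {k\<in>S. P k}) + 2 * int (card {k\<in>S. \<not> P k \<and> R k})"
proof -
  assume S: "finite S"
  have "(\<Sum>k\<in>S. if P k then (1::int) else if R k then 2 else 0)
     = (\<Sum>k\<in>S. (if P k then (1::int) else 0) + 2 * (if \<not> P k \<and> R k then 1 else 0))"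
    by (rule sum.cong) auto
  also have "\<dots> = (\<Sum>k\<in>S. if P k then (1::int) else 0) + 2 * (\<Sum>k\<in>S. if \<not> P k \<and> R k then (1::int) else 0)"
    by (simp add: sum.distrib sum_distrib_left)
  finally show ?thesis using sum_ind_card[OF S, of P] sum_ind_card[OF S, of "\<lambda>k. \<not> P k \<and> R k"] by simp
qed

lemma sum_cI: "1 \<le> i \<Longrightarrow> i \<le> r \<Longrightarrow> (\<Sum>k\<in>{1..<r}. cI r i k) = int r - int i"
proof -
  assume i: "1 \<le> i" "i \<le> r"
  have "{k\<in>{1..<r}. i \<le> k \<and> k \<le> r} = {i..<r}" using i by auto
  then show ?thesis unfolding cI_def using sum_ind_card[of "{1..<r}" "\<lambda>k. i \<le> k \<and> k \<le> r"] i by simp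
qed

lemma sum_cII: "1 \<le> i \<Longrightarrow> i < j \<Longrightarrow> j \<le> r \<Longrightarrow> (\<Sum>k\<in>{1..<r}. cII i j k) = int j - int i"
proof -
  assume i: "1 \<le> i" "i < j" "j \<le> r"
  have "{k\<in>{1..<r}. i \<le> k \<and> k < j} = {i..<j}" using i by auto
  then show ?thesis unfolding cII_def using sum_ind_card[of "{1..<r}" "\<lambda>k. i \<le> k \<and> k < j"] i by simp
qed

lemma sum_cIII: "1 \<le> i \<Longrightarrow> i < j \<Longrightarrow> j \<le> r \<Longrightarrow> (\<Sum>k\<in>{1..<r}. cIII r i j k) = int j - int i + 2 * (int r - int j)"
proof -
  assume i: "1 \<le> i" "i < j" "j \<le> r"
  have "{k\<in>{1..<r}. i \<le> k \<and> k < j} = {i..<j}" using i by auto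
  moreover have "{k\<in>{1..<r}. \<not> (i \<le> k \<and> k < j) \<and> (j \<le> k \<and> k \<le> r)} = {j..<r}" using i by auto
  ultimately show ?thesis unfolding cIII_def
    using sum_12[of "{1..<r}" "\<lambda>k. i \<le> k \<and> k < j" "\<lambda>k. j \<le> k \<and> k \<le> r"] i by simp
qed

lemma ht_cII: "1 \<le> i \<Longrightarrow> i < j \<Longrightarrow> j \<le> r \<Longrightarrow> (\<Sum>k\<in>{1..r}. cII i j k) = int j - int i"
proof -
  assume i: "1 \<le> i" "i < j" "j \<le> r"
  have "{k\<in>{1..r}. i \<le> k \<and> k < j} = {i..<j}" using i by auto
  then show ?thesis unfolding cII_def using sum_ind_card[of "{1..r}" "\<lambda>k. i \<le> k \<and> k < j"] i by simp
qed

lemma ht_bII: "1 \<le> i \<Longrightarrow> i < j \<Longrightarrow> j \<le> r \<Longrightarrow> (\<Sum>k\<in>{1..r}. bII r i j k) = int j - int i + 2 * (int r - int j) + 1"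
proof -
  assume i: "1 \<le> i" "i < j" "j \<le> r"
  have e: "(\<Sum>k\<in>{1..r}. bII r i j k) = (\<Sum>k\<in>{1..r}. cIII r i j k) - 1"
  proof -
    have "(\<Sum>k\<in>{1..r}. cIII r i j k) = (\<Sum>k\<in>{1..r}. bII r i j k + (if k = r then 1 else 0))"
      by (rule sum.cong[OF refl]) (use i in \<open>auto simp: cIII_def bII_def\<close>)
    also have "\<dots> = (\<Sum>k\<in>{1..r}. bII r i j k) + 1" using i by (simp add: sum.distrib)
    finally show ?thesis by simp
  qed
  have "{k\<in>{1..r}. i \<le> k \<and> k < j} = {i..<j}" using i by auto
  moreover have "{k\<in>{1..r}. \<not> (i \<le> k \<and> k < j) \<and> (j \<le> k \<and> k \<le> r)} = {j..<Suc r}" using i by auto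
  ultimately have "(\<Sum>k\<in>{1..r}. cIII r i j k) = int j - int i + 2 * (int (Suc r) - int j)" unfolding cIII_def
    using sum_12[of "{1..r}" "\<lambda>k. i \<le> k \<and> k < j" "\<lambda>k. j \<le> k \<and> k \<le> r"] i by simp
  then show ?thesis using e by simp
qed

lemma ht_bIII: "1 \<le> i \<Longrightarrow> i \<le> r \<Longrightarrow> (\<Sum>k\<in>{1..r}. bIII r i k) = 2 * (int r - int i) + 1"
proof -
  assume i: "1 \<le> i" "i \<le> r"
  have "(\<Sum>k\<in>{1..r}. bIII r i k) = (\<Sum>k\<in>{1..r}. 2 * (if i \<le> k \<and> k < r then 1 else 0) + (if k = r then 1 else 0))"
    by (rule sum.cong[OF refl]) (auto simp: bIII_def)
  also have "\<dots> = 2 * (\<Sum>k\<in>{1..r}. if i \<le> k \<and> k < r then (1::int) else 0) + 1"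
    using i by (simp add: sum.distrib sum_distrib_left)
  also have "{k\<in>{1..r}. i \<le> k \<and> k < r} = {i..<r}" using i by auto
  then have "(\<Sum>k\<in>{1..r}. if i \<le> k \<and> k < r then (1::int) else 0) = int r - int i"
    using sum_ind_card[of "{1..r}" "\<lambda>k. i \<le> k \<and> k < r"] i by simp
  finally show ?thesis by simp
qed

lemma coroot_cII: "1 \<le> i \<Longrightarrow> i < j \<Longrightarrow> j \<le> r \<Longrightarrow> coroot_C r (cII i j) = cII i j"
proof -
  assume i: "1 \<le> i" "i < j" "j \<le> r"
  have "cII i j \<notin> PhiIII r"
  proof
    assume "cII i j \<in> PhiIII r"
    then obtain i' where "cII i j = bIII r i'" unfolding PhiIII_eq by auto
    then have "cII i j r = bIII r i' r" by simp
    then show False using i by (simp add: cII_def bIII_def)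
  qed
  then show ?thesis unfolding coroot_C_def using i by (auto simp: cII_def)
qed

lemma coroot_bII: "1 \<le> i \<Longrightarrow> i < j \<Longrightarrow> j \<le> r \<Longrightarrow> coroot_C r (bII r i j) = cIII r i j"
proof -
  assume i: "1 \<le> i" "i < j" "j \<le> r"
  have "bII r i j \<notin> PhiIII r"
  proof
    assume "bII r i j \<in> PhiIII r"
    then obtain i' where "bII r i j = bIII r i'" unfolding PhiIII_eq by auto
    then have "bII r i j i = bIII r i' i" by simp
    then show False using i by (simp add: bII_def bIII_def split: if_splits)
  qed
  then show ?thesis unfolding coroot_C_def using i by (auto simp: cIII_def bII_def)
qed

lemma coroot_bIII: "1 \<le> i \<Longrightarrow> i \<le> r \<Longrightarrow> coroot_C r (bIII r i) = cI r i"
proof -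
  assume i: "1 \<le> i" "i \<le> r"
  have "bIII r i \<in> PhiIII r" unfolding PhiIII_eq using i by auto
  then show ?thesis unfolding coroot_C_def using i by (auto simp: cI_def bIII_def)
qed

lemma IS_I: "(\<lambda>i. 2 * (int r - int i) + 1) ` {1..r} = {k \<in> {1..2 * int r - 1}. odd k}"
proof (intro set_eqI iffI)
  fix k assume "k \<in> (\<lambda>i. 2 * (int r - int i) + 1) ` {1..r}"
  then show "k \<in> {k \<in> {1..2 * int r - 1}. odd k}" by auto
next
  fix k assume k: "k \<in> {k \<in> {1..2 * int r - 1}. odd k}"
  then obtain m where m: "k = 2 * m + 1" by (auto elim: oddE)
  have m0: "0 \<le> m" "m \<le> int r - 1" using k m by auto
  define i where "i = nat (int r - m)"
  have "i \<in> {1..r}" "k = 2 * (int r - int i) + 1" using m0 m unfolding i_def by auto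
  then show "k \<in> (\<lambda>i. 2 * (int r - int i) + 1) ` {1..r}" by blast
qed

lemma IS_II: "(\<lambda>(i,j). int j - int i) ` PP r = {1..int r - 1}"
proof (intro set_eqI iffI)
  fix k assume "k \<in> (\<lambda>(i,j). int j - int i) ` PP r"
  then show "k \<in> {1..int r - 1}" by (auto simp: PP_def)
next
  fix k assume k: "k \<in> {1..int r - 1}"
  have "(1, nat (k + 1)) \<in> PP r" "k = int (nat (k + 1)) - int 1" using k by (auto simp: PP_def)
  then show "k \<in> (\<lambda>(i,j). int j - int i) ` PP r" by (metis (no_types, lifting) case_prod_conv image_eqI)
qed

lemma IS_III: "(\<lambda>(i,j). int j - int i + 2 * (int r - int j) + 1) ` PP r = {2..2 * int r - 2}"
proof (intro set_eqI iffI)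
  fix k assume "k \<in> (\<lambda>(i,j). int j - int i + 2 * (int r - int j) + 1) ` PP r"
  then show "k \<in> {2..2 * int r - 2}" by (auto simp: PP_def)
next
  fix k assume k: "k \<in> {2..2 * int r - 2}"
  show "k \<in> (\<lambda>(i,j). int j - int i + 2 * (int r - int j) + 1) ` PP r"
  proof (cases "k \<le> int r")
    case True
    have "(nat (int r - k + 1), r) \<in> PP r"
      "k = int r - int (nat (int r - k + 1)) + 2 * (int r - int r) + 1" using k True by (auto simp: PP_def)
    then show ?thesis by (metis (no_types, lifting) case_prod_conv image_eqI)
  next
    case False
    have "(1, nat (2 * int r - k)) \<in> PP r"
      "k = int (nat (2 * int r - k)) - int 1 + 2 * (int r - int (nat (2 * int r - k))) + 1"
      using k False by (auto simp: PP_def)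
    then show ?thesis by (metis (no_types, lifting) case_prod_conv image_eqI)
  qed
qed

lemma IS_CI: "(\<lambda>i. int r - int i + 1) ` {1..r} = {1..int r}"
proof (intro set_eqI iffI)
  fix k assume "k \<in> (\<lambda>i. int r - int i + 1) ` {1..r}"
  then show "k \<in> {1..int r}" by auto
next
  fix k assume k: "k \<in> {1..int r}"
  have "nat (int r - k + 1) \<in> {1..r}" "k = int r - int (nat (int r - k + 1)) + 1" using k by auto
  then show "k \<in> (\<lambda>i. int r - int i + 1) ` {1..r}" by blast
qed

lemma IS_IV: "(\<lambda>(i,j). int j - int i + 2 * (int r - int j) + 2) ` PP r = {3..2 * int r - 1}"
proof (intro set_eqI iffI)
  fix k assume "k \<in> (\<lambda>(i,j). int j - int i + 2 * (int r - int j) + 2) ` PP r"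
  then show "k \<in> {3..2 * int r - 1}" by (auto simp: PP_def)
next
  fix k assume k: "k \<in> {3..2 * int r - 1}"
  have "(1, nat (2 * int r + 1 - k)) \<in> PP r \<or> (nat (int r + 2 - k), r) \<in> PP r" using k by (auto simp: PP_def)
  show "k \<in> (\<lambda>(i,j). int j - int i + 2 * (int r - int j) + 2) ` PP r"
  proof (cases "k \<ge> int r + 1")
    case True
    have "(1, nat (2 * int r + 1 - k)) \<in> PP r"
      "k = int (nat (2 * int r + 1 - k)) - int 1 + 2 * (int r - int (nat (2 * int r + 1 - k))) + 2"
      using k True by (auto simp: PP_def)
    then show ?thesis by (metis (no_types, lifting) case_prod_conv image_eqI)
  next
    case False
    have "(nat (int r + 2 - k), r) \<in> PP r"
      "k = int r - int (nat (int r + 2 - k)) + 2 * (int r - int r) + 2"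
      using k False by (auto simp: PP_def)
    then show ?thesis by (metis (no_types, lifting) case_prod_conv image_eqI)
  qed
qed

lemma nat_div_gcd_pos: "n \<ge> 1 \<Longrightarrow> nat (int n div gcd (int n) K) > 0"
proof -
  assume n: "n \<ge> 1"
  obtain t where t: "int n = gcd (int n) K * t" by (meson gcd_dvd1 dvdE)
  have gp: "gcd (int n) K > 0" using n by simp
  have "t > 0" using t gp n by (metis of_nat_0_less_iff zero_less_mult_iff less_le_trans zero_less_one
        order.strict_iff_not linorder_not_le)
  moreover have "int n div gcd (int n) K = t" using t gp
    by (metis nonzero_mult_div_cancel_left order_less_irrefl)
  ultimately show ?thesis by simp
qed

context CS
begin

lemma N1_pos: "N1 > 0" unfolding N1_def using nat_div_gcd_pos[OF n1] .
lemma N2_pos: "N2 > 0" unfolding N2_def using nat_div_gcd_pos[OF n1] .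
lemma Tr_pos: "Tr > 0" unfolding Tr_def using N1_pos N2_pos by simp

lemma fX_eq: "fX Q n r cor c = of_int (\<Sum>k\<in>{1..<r}. c k) / of_nat N1 + of_int (c r) / of_nat Tr"
proof -
  have U: "{1..r} = insert r {1..<r}" using r2 by auto
  have "fX Q n r cor c = (\<Sum>k\<in>{1..<r}. of_int (c k) / of_nat (tn_cor Q n (cor k))) + of_int (c r) / of_nat Tr"
    unfolding fX_def U by (simp add: tn_r)
  also have "(\<Sum>k\<in>{1..<r}. of_int (c k) / of_nat (tn_cor Q n (cor k)) :: rat) = (\<Sum>k\<in>{1..<r}. of_int (c k) / of_nat N1)"
    by (rule sum.cong[OF refl]) (simp add: tn_lt)
  also have "\<dots> = of_int (\<Sum>k\<in>{1..<r}. c k) / of_nat N1"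
    by (simp add: sum_divide_distrib)
  finally show ?thesis .
qed

lemma fX_cI: assumes i: "1 \<le> i" "i \<le> r"
  shows "fX Q n r cor (cI r i) = of_int (int r - int i) / of_nat N1 + 1 / of_nat Tr"
proof -
  have "cI r i r = 1" using i by (simp add: cI_def)
  then show ?thesis unfolding fX_eq sum_cI[OF i] by simp
qed
lemma fX_cII: assumes ij: "1 \<le> i" "i < j" "j \<le> r"
  shows "fX Q n r cor (cII i j) = of_int (int j - int i) / of_nat N1"
proof -
  have "cII i j r = 0" using ij by (simp add: cII_def)
  then show ?thesis unfolding fX_eq sum_cII[OF ij] by simp
qed
lemma fX_cIII: assumes ij: "1 \<le> i" "i < j" "j \<le> r"
  shows "fX Q n r cor (cIII r i j) = of_int (int j - int i + 2 * (int r - int j)) / of_nat N1 + 2 / of_nat Tr"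
proof -
  have "cIII r i j r = 2" using ij by (simp add: cIII_def)
  then show ?thesis unfolding fX_eq sum_cIII[OF ij] by simp
qed

lemma fY_cII: assumes ij: "1 \<le> i" "i < j" "j \<le> r"
  shows "fY Q n r cor (cII i j) = of_int (int j - int i) / of_nat N1"
  unfolding fY_def ht_cII[OF ij] coroot_cII[OF ij] tn_cII[OF ij] ..
lemma fY_bII: assumes ij: "1 \<le> i" "i < j" "j \<le> r"
  shows "fY Q n r cor (bII r i j) = of_int (int j - int i + 2 * (int r - int j) + 1) / of_nat N1"
  unfolding fY_def ht_bII[OF ij] coroot_bII[OF ij] tn_cIII[OF ij] ..
lemma fY_bIII: assumes i: "1 \<le> i" "i \<le> r"
  shows "fY Q n r cor (bIII r i) = of_int (2 * (int r - int i) + 1) / of_nat Tr"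
  unfolding fY_def ht_bIII[OF i] coroot_bIII[OF i] tn_cI[OF i] ..

end

lemma int_set_eq1: "{k \<in> {1..2 * int r - 1}. odd k} \<union> (\<lambda>k. 2 * k) ` {1..int r - 1} = {1..2 * int r - 1}"
proof (intro set_eqI iffI)
  fix k assume "k \<in> {k \<in> {1..2 * int r - 1}. odd k} \<union> (\<lambda>k. 2 * k) ` {1..int r - 1}"
  then show "k \<in> {1..2 * int r - 1}" by auto
next
  fix k :: int assume k: "k \<in> {1..2 * int r - 1}"
  show "k \<in> {k \<in> {1..2 * int r - 1}. odd k} \<union> (\<lambda>k. 2 * k) ` {1..int r - 1}"
  proof (cases "odd k")
    case True then show ?thesis using k by simp
  next
    case False
    then obtain m where m: "k = 2 * m" by (auto elim: evenE)
    then have "m \<in> {1..int r - 1}" using k by auto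
    then show ?thesis using m by blast
  qed
qed

lemma img_pair_cong:
  "(\<And>i j. (i, j) \<in> S \<Longrightarrow> f (i, j) = g (i, j)) \<Longrightarrow> f ` S = g ` S"
  by (rule image_cong[OF refl]) auto

context CS
begin

lemma n_cor_lt: "1 \<le> i \<Longrightarrow> i < r \<Longrightarrow> n_cor Q n (cor i) = N1"
  unfolding n_cor_def N1_def using Q_cor_lt by simp
lemma n_cor_r: "n_cor Q n (cor r) = N2"
  unfolding n_cor_def N2_def by simp

lemma imgs_I: "fX Q n r cor ` CoPhiI r = (\<lambda>i. fX Q n r cor (cI r i)) ` {1..r}"
  unfolding CoPhiI_eq image_image ..
lemma imgs_II: "fX Q n r cor ` CoPhiII r = (\<lambda>(i,j). fX Q n r cor (cII i j)) ` PP r"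
  unfolding CoPhiII_eq image_image by (simp add: case_prod_beta')
lemma imgs_III: "fX Q n r cor ` CoPhiIII r = (\<lambda>(i,j). fX Q n r cor (cIII r i j)) ` PP r"
  unfolding CoPhiIII_eq image_image by (simp add: case_prod_beta')
lemma imgsY_I: "fY Q n r cor ` PhiI r = (\<lambda>(i,j). fY Q n r cor (cII i j)) ` PP r"
  unfolding PhiI_eq image_image by (simp add: case_prod_beta')
lemma imgsY_II: "fY Q n r cor ` PhiII r = (\<lambda>(i,j). fY Q n r cor (bII r i j)) ` PP r"
  unfolding PhiII_eq image_image by (simp add: case_prod_beta')
lemma imgsY_III: "fY Q n r cor ` PhiIII r = (\<lambda>i. fY Q n r cor (bIII r i)) ` {1..r}"
  unfolding PhiIII_eq image_image ..

lemma II_eq: "fX Q n r cor ` CoPhiII r = fY Q n r cor ` PhiI r"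
  unfolding imgs_II imgsY_I by (rule img_pair_cong) (simp add: PP_def fX_cII fY_cII)

lemma II_val: "fX Q n r cor ` CoPhiII r = (\<lambda>k. of_int k / of_nat N1) ` {1..int r - 1}"
proof -
  have "fX Q n r cor ` CoPhiII r = (\<lambda>(i,j). of_int (int j - int i) / of_nat N1) ` PP r"
    unfolding imgs_II by (rule img_pair_cong) (simp add: PP_def fX_cII)
  also have "\<dots> = (\<lambda>k. of_int k / of_nat N1) ` ((\<lambda>(i,j). int j - int i) ` PP r)"
    unfolding image_image by (simp add: case_prod_beta')
  finally show ?thesis unfolding IS_II .
qed

lemma part1:
  assumes H: "\<forall>i\<in>{1..<r}. 2 * tn_cor Q n (cor i) = tn_cor Q n (cor r)"
  shows "(\<forall>i\<in>{1..r}. tn_cor Q n (cor i) = n_cor Q n (cor i))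
     \<and> fX Q n r cor ` CoPhiI r = fY Q n r cor ` PhiIII r
     \<and> fX Q n r cor ` CoPhiII r = fY Q n r cor ` PhiI r
     \<and> fX Q n r cor ` CoPhiIII r = fY Q n r cor ` PhiII r
     \<and> fX Q n r cor ` CoPhiPos r =
         (\<lambda>k. of_int k / of_nat (2 * n_cor Q n (cor 1))) ` {1..2 * int r - 1}
         \<union> (\<lambda>k. of_int k / of_nat (n_cor Q n (cor 1))) ` {2..2 * int r - 2}
     \<and> fY Q n r cor ` PhiPos r = fX Q n r cor ` CoPhiPos r"
proof -
  have "2 * tn_cor Q n (cor 1) = tn_cor Q n (cor r)" using H r2 by auto
  then have TrE: "Tr = 2 * N1" using tn_lt[of 1] tn_r r2 by simp
  have TrN2: "Tr = N2" using TrE N1_pos unfolding Tr_def by (auto split: if_splits)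
  have A0: "(of_nat N1 :: rat) > 0" using N1_pos by simp
  have c1: "\<forall>i\<in>{1..r}. tn_cor Q n (cor i) = n_cor Q n (cor i)"
  proof
    fix i assume i: "i \<in> {1..r}"
    show "tn_cor Q n (cor i) = n_cor Q n (cor i)"
    proof (cases "i < r")
      case True then show ?thesis using i tn_lt n_cor_lt by simp
    next
      case False then have "i = r" using i by simp
      then show ?thesis using tn_r n_cor_r TrN2 by simp
    qed
  qed
  have nc1: "n_cor Q n (cor 1) = N1" using n_cor_lt[of 1] r2 by simp
  define h :: "int \<Rightarrow> rat" where "h k = of_int k / of_nat (2 * N1)" for k
  define g :: "int \<Rightarrow> rat" where "g k = of_int k / of_nat N1" for k
  have gh: "g ` T = h ` ((\<lambda>k. 2 * k) ` T)" for T
    unfolding image_image g_def h_def using A0 by (intro image_cong[OF refl]) (simp add: field_simps)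
  have e1: "fX Q n r cor ` CoPhiI r = fY Q n r cor ` PhiIII r"
    unfolding imgs_I imgsY_III
    by (rule image_cong[OF refl]) (use A0 in \<open>simp add: fX_cI fY_bIII TrE field_simps\<close>)
  have e3: "fX Q n r cor ` CoPhiIII r = fY Q n r cor ` PhiII r"
    unfolding imgs_III imgsY_II
    by (rule img_pair_cong) (use A0 in \<open>simp add: PP_def fX_cIII fY_bII TrE field_simps\<close>)
  have v1: "fX Q n r cor ` CoPhiI r = h ` {k \<in> {1..2 * int r - 1}. odd k}"
  proof -
    have "fX Q n r cor ` CoPhiI r = (\<lambda>i. h (2 * (int r - int i) + 1)) ` {1..r}"
      unfolding e1 imgsY_III h_def by (rule image_cong[OF refl]) (simp add: fY_bIII TrE)
    then show ?thesis unfolding IS_I[symmetric] image_image .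
  qed
  have v3: "fX Q n r cor ` CoPhiIII r = g ` {2..2 * int r - 2}"
  proof -
    have "fX Q n r cor ` CoPhiIII r = (\<lambda>(i,j). g (int j - int i + 2 * (int r - int j) + 1)) ` PP r"
      unfolding e3 imgsY_II g_def by (rule img_pair_cong) (simp add: PP_def fY_bII)
    then show ?thesis unfolding IS_III[symmetric] image_image by (simp add: case_prod_beta')
  qed
  have v2: "fX Q n r cor ` CoPhiII r = g ` {1..int r - 1}" unfolding II_val g_def ..
  have e4: "fX Q n r cor ` CoPhiPos r = h ` {1..2 * int r - 1} \<union> g ` {2..2 * int r - 2}"
  proof -
    have "fX Q n r cor ` CoPhiPos r = h ` {k \<in> {1..2 * int r - 1}. odd k} \<union> g ` {1..int r - 1} \<union> g ` {2..2 * int r - 2}"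
      unfolding CoPhiPos_def image_Un v1 v2 v3 ..
    also have "\<dots> = h ` ({k \<in> {1..2 * int r - 1}. odd k} \<union> (\<lambda>k. 2 * k) ` {1..int r - 1}) \<union> g ` {2..2 * int r - 2}"
      unfolding gh image_Un ..
    also have "\<dots> = h ` {1..2 * int r - 1} \<union> g ` {2..2 * int r - 2}" unfolding int_set_eq1 ..
    finally show ?thesis .
  qed
  have e5: "fY Q n r cor ` PhiPos r = fX Q n r cor ` CoPhiPos r"
    unfolding PhiPos_def CoPhiPos_def image_Un e1 II_eq e3 by blast
  show ?thesis using c1 e1 II_eq e3 e4 e5 unfolding nc1 h_def g_def by blast
qed

lemma part2:
  assumes H: "\<forall>i\<in>{1..r}. tn_cor Q n (cor i) = tn_cor Q n (cor 1)"
  shows "fX Q n r cor ` CoPhiPos r =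
         (\<lambda>k. of_int k / of_nat (tn_cor Q n (cor 1))) ` {1..2 * int r - 1}
     \<and> fY Q n r cor ` PhiPos r = fX Q n r cor ` CoPhiPos r"
proof -
  have t1: "tn_cor Q n (cor 1) = N1" using tn_lt[of 1] r2 by simp
  have "r \<in> {1..r}" using r2 by simp
  then have "tn_cor Q n (cor r) = tn_cor Q n (cor 1)" using H by blast
  then have TrE: "Tr = N1" using tn_r t1 by simp
  have A0: "(of_nat N1 :: rat) > 0" using N1_pos by simp
  define g :: "int \<Rightarrow> rat" where "g k = of_int k / of_nat N1" for k
  have v1: "fX Q n r cor ` CoPhiI r = g ` {1..int r}"
  proof -
    have "fX Q n r cor ` CoPhiI r = (\<lambda>i. g (int r - int i + 1)) ` {1..r}"
      unfolding imgs_I g_def by (rule image_cong[OF refl]) (use A0 in \<open>simp add: fX_cI TrE field_simps\<close>)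
    then show ?thesis unfolding IS_CI[symmetric] image_image .
  qed
  have v2: "fX Q n r cor ` CoPhiII r = g ` {1..int r - 1}" unfolding II_val g_def ..
  have v3: "fX Q n r cor ` CoPhiIII r = g ` {3..2 * int r - 1}"
  proof -
    have "fX Q n r cor ` CoPhiIII r = (\<lambda>(i,j). g (int j - int i + 2 * (int r - int j) + 2)) ` PP r"
      unfolding imgs_III g_def by (rule img_pair_cong) (use A0 in \<open>simp add: PP_def fX_cIII TrE field_simps\<close>)
    then show ?thesis unfolding IS_IV[symmetric] image_image by (simp add: case_prod_beta')
  qed
  have w1: "fY Q n r cor ` PhiI r = g ` {1..int r - 1}" unfolding II_eq[symmetric] v2 ..
  have w2: "fY Q n r cor ` PhiII r = g ` {2..2 * int r - 2}"
  proof -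
    have "fY Q n r cor ` PhiII r = (\<lambda>(i,j). g (int j - int i + 2 * (int r - int j) + 1)) ` PP r"
      unfolding imgsY_II g_def by (rule img_pair_cong) (simp add: PP_def fY_bII)
    then show ?thesis unfolding IS_III[symmetric] image_image by (simp add: case_prod_beta')
  qed
  have w3: "fY Q n r cor ` PhiIII r = g ` {k \<in> {1..2 * int r - 1}. odd k}"
  proof -
    have "fY Q n r cor ` PhiIII r = (\<lambda>i. g (2 * (int r - int i) + 1)) ` {1..r}"
      unfolding imgsY_III g_def by (rule image_cong[OF refl]) (simp add: fY_bIII TrE)
    then show ?thesis unfolding IS_I[symmetric] image_image .
  qed
  have s1: "{1..int r} \<union> {1..int r - 1} \<union> {3..2 * int r - 1} = {1..2 * int r - 1}"
  proof (intro set_eqI)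
    fix k :: int
    show "k \<in> {1..int r} \<union> {1..int r - 1} \<union> {3..2 * int r - 1} \<longleftrightarrow> k \<in> {1..2 * int r - 1}"
      using r2 by auto
  qed
  have s2: "{1..int r - 1} \<union> {2..2 * int r - 2} \<union> {k \<in> {1..2 * int r - 1}. odd k} = {1..2 * int r - 1}"
  proof (intro set_eqI iffI)
    fix k assume "k \<in> {1..int r - 1} \<union> {2..2 * int r - 2} \<union> {k \<in> {1..2 * int r - 1}. odd k}"
    then show "k \<in> {1..2 * int r - 1}" by auto
  next
    fix k :: int assume k: "k \<in> {1..2 * int r - 1}"
    show "k \<in> {1..int r - 1} \<union> {2..2 * int r - 2} \<union> {k \<in> {1..2 * int r - 1}. odd k}"
    proof (cases "odd k")
      case True then show ?thesis using k by simp
    next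
      case False
      then have "k \<noteq> 1" "k \<noteq> 2 * int r - 1" by auto
      then show ?thesis using k by auto
    qed
  qed
  have "fX Q n r cor ` CoPhiPos r = g ` {1..int r} \<union> g ` {1..int r - 1} \<union> g ` {3..2 * int r - 1}"
    unfolding CoPhiPos_def image_Un v1 v2 v3 ..
  also have "\<dots> = g ` ({1..int r} \<union> {1..int r - 1} \<union> {3..2 * int r - 1})" by (simp only: image_Un)
  finally have e4: "fX Q n r cor ` CoPhiPos r = g ` {1..2 * int r - 1}" unfolding s1 .
  have "fY Q n r cor ` PhiPos r = g ` {1..int r - 1} \<union> g ` {2..2 * int r - 2} \<union> g ` {k \<in> {1..2 * int r - 1}. odd k}"
    unfolding PhiPos_def image_Un w1 w2 w3 ..
  also have "\<dots> = g ` ({1..int r - 1} \<union> {2..2 * int r - 2} \<union> {k \<in> {1..2 * int r - 1}. odd k})" by (simp only: image_Un)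
  finally have e5: "fY Q n r cor ` PhiPos r = g ` {1..2 * int r - 1}" unfolding s2 .
  have gg: "(\<lambda>k. of_int k / of_nat (tn_cor Q n (cor 1))) = g" unfolding t1 g_def by (rule refl)
  show ?thesis unfolding gg
  proof
    show "fX Q n r cor ` CoPhiPos r = g ` {1..2 * int r - 1}" by (rule e4)
    show "fY Q n r cor ` PhiPos r = fX Q n r cor ` CoPhiPos r" unfolding e4 e5 ..
  qed
qed

end

theorem lemma3p3:
  fixes Q :: "int ^ 'd \<Rightarrow> int" and n r :: nat
    and rt cor :: "nat \<Rightarrow> int ^ 'd"
  assumes "r \<ge> 2" and "n \<ge> 1"
    and "root_datum_C r rt cor"
    and "quadratic_form Q"
    and "weyl_invariant r rt cor Q"
  shows
   "((\<forall>i\<in>{1..<r}. 2 * tn_cor Q n (cor i) = tn_cor Q n (cor r)) \<longrightarrow>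
       (\<forall>i\<in>{1..r}. tn_cor Q n (cor i) = n_cor Q n (cor i))
     \<and> fX Q n r cor ` CoPhiI r = fY Q n r cor ` PhiIII r
     \<and> fX Q n r cor ` CoPhiII r = fY Q n r cor ` PhiI r
     \<and> fX Q n r cor ` CoPhiIII r = fY Q n r cor ` PhiII r
     \<and> fX Q n r cor ` CoPhiPos r =
         (\<lambda>k. of_int k / of_nat (2 * n_cor Q n (cor 1))) ` {1..2 * int r - 1}
         \<union> (\<lambda>k. of_int k / of_nat (n_cor Q n (cor 1))) ` {2..2 * int r - 2}
     \<and> fY Q n r cor ` PhiPos r = fX Q n r cor ` CoPhiPos r)
    \<and> ((\<forall>i\<in>{1..r}. tn_cor Q n (cor i) = tn_cor Q n (cor 1)) \<longrightarrow>
       fX Q n r cor ` CoPhiPos r =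
         (\<lambda>k. of_int k / of_nat (tn_cor Q n (cor 1))) ` {1..2 * int r - 1}
     \<and> fY Q n r cor ` PhiPos r = fX Q n r cor ` CoPhiPos r)"
proof -
  interpret CS Q n r rt cor by (rule CS.intro) (rule assms)+
  show ?thesis using part1 part2 by blast
qed

end
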